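(* Suppose Assumption 1 holds and let $(f_t)_{t\in\mathbb N}$ be the online gradient descent iterates with step sizes satisfying $\lim_{t\to\infty}\eta_t=0$ and $\sum_{t=1}^\infty\eta_t=\infty$. Then $$\liminf_{t\to\infty}\mathbb E\big[\mathcal E(f_t)-\mathcal E(f_H)\big]=0\qquad\text{and}\qquad\lim_{T\to\infty}\Big[\sum_{t=1}^T\eta_t\Big]^{-1}\sum_{t=1}^T\eta_t\,\mathbb E\big[\mathcal E(f_t)-\mathcal E(f_H)\big]=0.$$
   Context: Setting: Let $\mathcal X\subset\mathbb R^d$, $\mathcal Y\subset\mathbb R$, $\mathcal Z=\mathcal X\times\mathcal Y$, and let $\rho$ be a Borel probability measure on $\mathcal Z$. Let $K:\mathcal X\times\mathcal X\to\mathbb R$ be a continuous, symmetric, positive semi-definite kernel with reproducing kernel Hilbert space $H_K$ (inner product $\langle\cdot,\cdot\rangle$, norm $\|\cdot\|$), $K_x:=K(x,\cdot)$, reproducing property $f(x)=\langle f,K_x\rangle$, and $\kappa:=\sup_{x\in\mathcal X}\sqrt{K(x,x)}<\infty$. Let $\phi:\mathcal Y\times\mathbb R\to[0,\infty)$ be a loss function, differentiable in its second argument, and write $\phi'(y,s)$ for its derivative with respect to $s$. The generalization error of $f:\mathcal X\to\mathbb R$ is $\mathcal E(f)=\int_{\mathcal Z}\phi(y,f(x))\,d\rho(x,y)$. It is assumed that a minimizer $f_H\in\arg\min_{f\in H_K}\mathcal E(f)$ exists and that $\max\{\sup_{y\in\mathcal Y}\phi(y,0),\ \sup_{(x,y)\in\mathcal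 Z}\phi(y,f_H(x))\}<\infty$. Let $z_t=(x_t,y_t)$, $t\in\mathbb N$, be i.i.d. samples from $\rho$, let $(\eta_t)_{t\in\mathbb N}$ be positive step sizes, and define the online gradient descent iterates by $f_1=0$ and $f_{t+1}=f_t-\eta_t\phi'(y_t,f_t(x_t))K_{x_t}$ for $t\in\mathbb N$ (so $f_t$ depends only on $z_1,\dots,z_{t-1}$). Assumption 1: for every $y\in\mathcal Y$, $\phi(y,\cdot)$ is convex and differentiable, and there are constants $\alpha\in(0,1]$, $L>0$ with $|\phi'(y,s)-\phi'(y,\tilde s)|\le L|s-\tilde s|^{\alpha}$ for all $s,\tilde s\in\mathbb R$, $y\in\mathcal Y$. *)

theory Defs
  imports "HOL-Probability.Probability"
begin

text \<open>Elements of the RKHS are represented through a feature map \<Phi> into a real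
Hilbert space with K x x' = inner (\<Phi> x) (\<Phi> x'); the function represented by a
vector w is x \<mapsto> inner w (\<Phi> x), and K_x corresponds to \<Phi> x.\<close>

definition rkhs_fun :: "('x \<Rightarrow> 'h::real_inner) \<Rightarrow> 'h \<Rightarrow> 'x \<Rightarrow> real" where
  "rkhs_fun \<Phi> w = (\<lambda>x. inner w (\<Phi> x))"

definition gen_err :: "('x \<times> real) measure \<Rightarrow> (real \<Rightarrow> real \<Rightarrow> real) \<Rightarrow> ('x \<Rightarrow> real) \<Rightarrow> real" where
  "gen_err \<rho> \<phi> f = (\<integral>z. \<phi> (snd z) (f (fst z)) \<partial>\<rho>)"

text \<open>The value at t = 0 is an unused dummy.\<close>
fun ogd :: "('x \<Rightarrow> 'h::real_inner) \<Rightarrow> (real \<Rightarrow> real \<Rightarrow> real) \<Rightarrow> (nat \<Rightarrow> real)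
    \<Rightarrow> (nat \<Rightarrow> 'x \<times> real) \<Rightarrow> nat \<Rightarrow> 'h" where
  "ogd \<Phi> d\<phi> \<eta> z 0 = 0"
| "ogd \<Phi> d\<phi> \<eta> z (Suc t) =
     (if t = 0 then 0
      else ogd \<Phi> d\<phi> \<eta> z t
           - (\<eta> t * d\<phi> (snd (z t)) (inner (ogd \<Phi> d\<phi> \<eta> z t) (\<Phi> (fst (z t))))) *\<^sub>R \<Phi> (fst (z t)))"

end

theory Submission
  imports Defs
begin


lemma sum_split_nat:
  fixes f :: "nat \<Rightarrow> real"
  assumes "N \<le> T"
  shows "sum f {1..T} = sum f {1..N} + sum f {N<..T}"
proof -
  have "{1..T} = {1..N} \<union> {N<..T}" using assms by auto
  thus ?thesis by (simp add: sum.union_disjoint ivl_disj_int)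
qed

lemma sq_over_S:
  fixes \<eta> :: "nat \<Rightarrow> real"
  assumes pos: "\<forall>t\<ge>1. 0 < \<eta> t" and lim: "\<eta> \<longlonglongrightarrow> 0"
    and div: "filterlim (\<lambda>T. \<Sum>t=1..T. \<eta> t) at_top sequentially"
  shows "(\<lambda>T. (\<Sum>t=1..T. (\<eta> t)\<^sup>2) / (\<Sum>t=1..T. \<eta> t)) \<longlonglongrightarrow> 0"
proof -
  define S where "S T = (\<Sum>t=1..T. \<eta> t)" for T
  define Q where "Q T = (\<Sum>t=1..T. (\<eta> t)\<^sup>2)" for T
  have Sinf: "filterlim S at_top sequentially" using div by (simp add: S_def[abs_def])
  have Qnn: "0 \<le> Q T" for T unfolding Q_def by (simp add: sum_nonneg)
  show ?thesis unfolding S_def[symmetric] Q_def[symmetric] tendsto_iff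
  proof (intro allI impI)
    fix e :: real assume e: "0 < e"
    from lim have "eventually (\<lambda>t. dist (\<eta> t) 0 < e/2) sequentially"
      using e tendsto_iff half_gt_zero by blast
    then obtain N where N: "\<And>t. t \<ge> N \<Longrightarrow> \<bar>\<eta> t\<bar> < e/2"
      by (auto simp: eventually_sequentially)
    have QS: "Q T \<le> Q N + e/2 * S T" if "T \<ge> N" for T
    proof -
      have A1: "Q T = Q N + (\<Sum>t\<in>{N<..T}. (\<eta> t)\<^sup>2)"
        unfolding Q_def using that by (rule sum_split_nat)
      have A2: "(\<Sum>t\<in>{N<..T}. (\<eta> t)\<^sup>2) \<le> (\<Sum>t\<in>{N<..T}. e/2 * \<eta> t)"
      proof (rule sum_mono)
        fix t assume t: "t \<in> {N<..T}"
        hence "0 < \<eta> t" using pos by auto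
        moreover have "\<eta> t < e/2" using N[of t] t by auto
        ultimately show "(\<eta> t)\<^sup>2 \<le> e/2 * \<eta> t" by (simp add: power2_eq_square)
      qed
      have A3: "(\<Sum>t\<in>{N<..T}. e/2 * \<eta> t) = e/2 * (\<Sum>t\<in>{N<..T}. \<eta> t)" by (simp add: sum_distrib_left)
      have A4: "(\<Sum>t\<in>{N<..T}. \<eta> t) \<le> S T"
        unfolding S_def using pos by (intro sum_mono2) auto
      have A5: "e/2 * (\<Sum>t\<in>{N<..T}. \<eta> t) \<le> e/2 * S T"
        using A4 e by (intro mult_left_mono) auto
      show ?thesis using A1 A2 A3 A5 by linarith
    qed
    have QNS: "((\<lambda>T. Q N / S T) \<longlongrightarrow> 0) sequentially"
      by (rule tendsto_divide_0[OF tendsto_const]) (rule filterlim_at_top_imp_at_infinity[OF Sinf])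
    have "eventually (\<lambda>T. dist (Q N / S T) 0 < e/2) sequentially"
      using tendsto_iff[THEN iffD1, OF QNS, rule_format, of "e/2"] e by simp
    hence ev1: "eventually (\<lambda>T. Q N / S T < e/2) sequentially"
      by (rule eventually_mono) (metis abs_ge_self diff_zero dist_real_def order_le_less_trans)
    have ev2: "eventually (\<lambda>T. S T > 0) sequentially"
      using Sinf[unfolded filterlim_at_top_dense, rule_format, of 0] by simp
    show "eventually (\<lambda>T. dist (Q T / S T) 0 < e) sequentially"
      using ev1 ev2 eventually_ge_at_top[of N]
    proof eventually_elim
      case (elim T)
      have "Q T / S T \<le> (Q N + e/2 * S T) / S T"
        using QS[OF elim(3)] elim(2) by (intro divide_right_mono) auto
      also have "\<dots> = Q N / S T + e/2" using elim(2) by (simp add: add_divide_distrib)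
      finally have "Q T / S T < e" using elim(1) by linarith
      moreover have "0 \<le> Q T / S T" using Qnn elim(2) by simp
      ultimately show ?case by simp
    qed
  qed
qed

lemma avg_to_zero:
  fixes \<eta> G :: "nat \<Rightarrow> real"
  assumes pos: "\<forall>t\<ge>1. 0 < \<eta> t" and lim: "\<eta> \<longlonglongrightarrow> 0"
    and div: "filterlim (\<lambda>T. \<Sum>t=1..T. \<eta> t) at_top sequentially"
    and Gnn: "\<And>t. 0 \<le> G t" and T0: "1 \<le> T0" and C: "0 \<le> C"
    and bound: "\<And>T. T \<ge> T0 \<Longrightarrow> (\<Sum>t=T0..T. \<eta> t * G t) \<le> R + C * (\<Sum>t=T0..T. (\<eta> t)\<^sup>2)"
  shows "(\<lambda>T. (\<Sum>t=1..T. \<eta> t * G t) / (\<Sum>t=1..T. \<eta> t)) \<longlonglongrightarrow> 0"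
    and "liminf (\<lambda>t. ereal (G t)) = 0"
proof -
  define S where "S T = (\<Sum>t=1..T. \<eta> t)" for T
  define Q where "Q T = (\<Sum>t=1..T. (\<eta> t)\<^sup>2)" for T
  define P where "P T = (\<Sum>t=1..T. \<eta> t * G t)" for T
  have Sinf: "filterlim S at_top sequentially" using div by (simp add: S_def[abs_def])
  have QS: "(\<lambda>T. Q T / S T) \<longlonglongrightarrow> 0"
    using sq_over_S[OF pos lim div] by (simp add: S_def[abs_def] Q_def[abs_def])
  have ev2: "eventually (\<lambda>T. S T > 0) sequentially"
    using Sinf[unfolded filterlim_at_top_dense, rule_format, of 0] by simp
  have Pnn: "0 \<le> P T" for T unfolding P_def using pos Gnn by (intro sum_nonneg) auto
  define R' where "R' = R + P (T0 - 1)"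
  have PB: "P T \<le> R' + C * Q T" if "T \<ge> T0" for T
  proof -
    have e1: "P T = P (T0 - 1) + (\<Sum>t\<in>{T0-1<..T}. \<eta> t * G t)"
      unfolding P_def using that by (intro sum_split_nat) auto
    have e2: "{T0-1<..T} = {T0..T}" using T0 by auto
    have e3: "(\<Sum>t=T0..T. (\<eta> t)\<^sup>2) \<le> Q T"
      unfolding Q_def using T0 by (intro sum_mono2) auto
    have "C * (\<Sum>t=T0..T. (\<eta> t)\<^sup>2) \<le> C * Q T" using e3 C by (rule mult_left_mono)
    thus ?thesis using e1 e2 bound[OF that] unfolding R'_def by simp
  qed
  have lim1: "(\<lambda>T. P T / S T) \<longlonglongrightarrow> 0"
  proof (rule tendsto_sandwich[where f="\<lambda>_. 0" and h="\<lambda>T. R' / S T + C * (Q T / S T)"])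
    show "eventually (\<lambda>T. 0 \<le> P T / S T) sequentially"
      using ev2 by eventually_elim (simp add: Pnn)
    show "eventually (\<lambda>T. P T / S T \<le> R' / S T + C * (Q T / S T)) sequentially"
      using ev2 eventually_ge_at_top[of T0]
    proof eventually_elim
      case (elim T)
      have "P T / S T \<le> (R' + C * Q T) / S T"
        using PB[OF elim(2)] elim(1) by (intro divide_right_mono) auto
      also have "\<dots> = R' / S T + C * (Q T / S T)" by (simp add: add_divide_distrib)
      finally show ?case .
    qed
    show "(\<lambda>_. 0::real) \<longlonglongrightarrow> 0" by simp
    have "(\<lambda>T. R' / S T) \<longlonglongrightarrow> 0"
      by (rule tendsto_divide_0[OF tendsto_const]) (rule filterlim_at_top_imp_at_infinity[OF Sinf])
    hence "(\<lambda>T. R' / S T + C * (Q T / S T)) \<longlonglongrightarrow> 0 + C * 0"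
      by (intro tendsto_add tendsto_mult tendsto_const QS)
    thus "(\<lambda>T. R' / S T + C * (Q T / S T)) \<longlonglongrightarrow> 0" by simp
  qed
  thus "(\<lambda>T. (\<Sum>t=1..T. \<eta> t * G t) / (\<Sum>t=1..T. \<eta> t)) \<longlonglongrightarrow> 0"
    by (simp add: P_def[abs_def] S_def[abs_def])
  have lo: "0 \<le> liminf (\<lambda>t. ereal (G t))"
    by (rule Liminf_bounded) (simp add: Gnn)
  have hi: "\<not> 0 < liminf (\<lambda>t. ereal (G t))"
  proof
    assume "0 < liminf (\<lambda>t. ereal (G t))"
    then obtain c where c0: "0 < c" and cl: "ereal c < liminf (\<lambda>t. ereal (G t))"
      by (metis ereal_dense2 ereal_less(2) ereal_less_eq(6) less_ereal.simps(2) order_less_imp_le)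
    have "eventually (\<lambda>t. ereal c < ereal (G t)) sequentially"
      using less_LiminfD[OF cl] by simp
    then obtain N where N: "\<And>t. t \<ge> N \<Longrightarrow> c < G t" by (auto simp: eventually_sequentially)
    define N' where "N' = max N 1"
    have low: "c - c * (S (N' - 1) / S T) \<le> P T / S T" if "T \<ge> N'" "S T > 0" for T
    proof -
      have e1: "P T = P (N' - 1) + (\<Sum>t\<in>{N'-1<..T}. \<eta> t * G t)"
        unfolding P_def using that by (intro sum_split_nat) auto
      have e1': "S T = S (N' - 1) + (\<Sum>t\<in>{N'-1<..T}. \<eta> t)"
        unfolding S_def using that by (intro sum_split_nat) auto
      have "(\<Sum>t\<in>{N'-1<..T}. c * \<eta> t) \<le> (\<Sum>t\<in>{N'-1<..T}. \<eta> t * G t)"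
      proof (rule sum_mono)
        fix t assume t: "t \<in> {N'-1<..T}"
        hence "t \<ge> N" "t \<ge> 1" unfolding N'_def by auto
        hence "c < G t" "0 < \<eta> t" using N pos by auto
        thus "c * \<eta> t \<le> \<eta> t * G t" by (simp add: mult.commute)
      qed
      hence "c * (S T - S (N' - 1)) \<le> P T"
        using e1 e1' Pnn[of "N' - 1"] by (simp add: sum_distrib_left)
      hence "c * (S T - S (N' - 1)) / S T \<le> P T / S T"
        using that(2) by (intro divide_right_mono) auto
      moreover have "c * (S T - S (N' - 1)) / S T = c - c * (S (N' - 1) / S T)"
        using that(2) by (simp add: field_simps)
      ultimately show ?thesis by simp
    qed
    have "(\<lambda>T. c - c * (S (N' - 1) / S T)) \<longlonglongrightarrow> c - c * 0"
      by (intro tendsto_diff tendsto_mult tendsto_const tendsto_divide_0[OF tendsto_const]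
          filterlim_at_top_imp_at_infinity[OF Sinf])
    hence Lc: "(\<lambda>T. c - c * (S (N' - 1) / S T)) \<longlonglongrightarrow> c" by simp
    have EN: "\<exists>N0. \<forall>T\<ge>N0. c - c * (S (N' - 1) / S T) \<le> P T / S T"
    proof -
      from ev2 obtain N1 where "\<And>T. T \<ge> N1 \<Longrightarrow> S T > 0" by (auto simp: eventually_sequentially)
      thus ?thesis using low by (intro exI[of _ "max N1 N'"]) auto
    qed
    have "c \<le> 0" using Lc lim1 EN by (rule LIMSEQ_le)
    thus False using c0 by simp
  qed
  show "liminf (\<lambda>t. ereal (G t)) = 0" using lo hi by simp
qed




lemma quad_upper:
  fixes f f' :: "real \<Rightarrow> real"
  assumes deriv: "\<And>s. (f has_real_derivative f' s) (at s)"
    and hoel: "\<And>s s'. \<bar>f' s - f' s'\<bar> \<le> L * \<bar>s - s'\<bar> powr \<alpha>"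
    and a: "0 < \<alpha>" and L: "0 < L"
  shows "f s' \<le> f s + f' s * (s' - s) + L * \<bar>s' - s\<bar> powr \<alpha> * \<bar>s' - s\<bar>"
proof (cases s s' rule: linorder_cases)
  case less
  obtain z where z: "s < z" "z < s'" "f s' - f s = (s' - s) * f' z"
    using MVT2[OF less, of f f'] deriv by blast
  have "(f' z - f' s) * (s' - s) \<le> \<bar>f' z - f' s\<bar> * (s' - s)"
    using less by (intro mult_right_mono) auto
  also have "\<dots> \<le> L * \<bar>z - s\<bar> powr \<alpha> * (s' - s)"
    using less hoel[of z s] by (intro mult_right_mono) auto
  also have "\<dots> \<le> L * \<bar>s' - s\<bar> powr \<alpha> * (s' - s)"
    using less z L a by (intro mult_right_mono mult_left_mono powr_mono2) auto
  finally show ?thesis using z less by (simp add: algebra_simps)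
next
  case equal thus ?thesis by simp
next
  case greater
  obtain z where z: "s' < z" "z < s" "f s - f s' = (s - s') * f' z"
    using MVT2[OF greater, of f f'] deriv by blast
  have "(f' z - f' s) * (s' - s) = (f' s - f' z) * (s - s')" by (simp add: algebra_simps)
  also have "\<dots> \<le> \<bar>f' z - f' s\<bar> * (s - s')"
    using greater by (intro mult_right_mono) auto
  also have "\<dots> \<le> L * \<bar>z - s\<bar> powr \<alpha> * (s - s')"
    using greater hoel[of z s] by (intro mult_right_mono) auto
  also have "\<dots> \<le> L * \<bar>s' - s\<bar> powr \<alpha> * (s - s')"
    using greater z L a by (intro mult_right_mono mult_left_mono powr_mono2) auto
  finally show ?thesis using z greater by (simp add: algebra_simps)
qed

lemma grad_sq:
  fixes f f' :: "real \<Rightarrow> real"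
  assumes deriv: "\<And>s. (f has_real_derivative f' s) (at s)"
    and hoel: "\<And>s s'. \<bar>f' s - f' s'\<bar> \<le> L * \<bar>s - s'\<bar> powr \<alpha>"
    and a: "0 < \<alpha>" "\<alpha> \<le> 1" and L: "0 < L" and nn: "\<And>s. 0 \<le> f s"
  shows "(f' s)\<^sup>2 \<le> 4 * L\<^sup>2 + 4 * L * f s"
proof (cases "\<bar>f' s\<bar> < 2 * L")
  case True
  hence "(f' s)\<^sup>2 \<le> (2 * L)\<^sup>2"
    by (metis abs_ge_zero abs_power2 less_imp_le power2_abs power_mono)
  moreover have "0 \<le> 4 * L * f s" using nn[of s] L by simp
  ultimately show ?thesis by (simp add: power_mult_distrib)
next
  case False
  define g where "g = f' s"
  define r where "r = \<bar>g\<bar> / (2 * L)"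
  have r1: "1 \<le> r" using False L unfolding r_def g_def by simp
  define s' where "s' = (if g \<ge> 0 then s - r else s + r)"
  have ds: "\<bar>s' - s\<bar> = r" using r1 unfolding s'_def by auto
  have gd: "g * (s' - s) = - \<bar>g\<bar> * r" unfolding s'_def by auto
  have "r powr \<alpha> \<le> r powr 1" using r1 a by (intro powr_mono) auto
  hence rp: "r powr \<alpha> \<le> r" using r1 by simp
  have "0 \<le> f s'" by (rule nn)
  also have "f s' \<le> f s + g * (s' - s) + L * \<bar>s' - s\<bar> powr \<alpha> * \<bar>s' - s\<bar>"
    unfolding g_def by (rule quad_upper[OF deriv hoel a(1) L])
  also have "\<dots> = f s - \<bar>g\<bar> * r + L * r powr \<alpha> * r" using ds gd by simp
  also have "\<dots> \<le> f s - \<bar>g\<bar> * r + L * r * r"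
    using rp r1 L by (intro add_left_mono mult_right_mono mult_left_mono) auto
  finally have "\<bar>g\<bar> * r - L * r * r \<le> f s" by simp
  moreover have "\<bar>g\<bar> * r - L * r * r = g\<^sup>2 / (4 * L)"
    unfolding r_def using L by (simp add: field_simps power2_eq_square)
  ultimately have "g\<^sup>2 / (4 * L) \<le> f s" by simp
  hence "g\<^sup>2 \<le> 4 * L * f s" using L by (simp add: field_simps)
  thus ?thesis unfolding g_def using L by (smt (verit) zero_le_power2)
qed

lemma tangent_ineq:
  fixes f f' :: "real \<Rightarrow> real"
  assumes "convex_on UNIV f" and "\<And>s. (f has_real_derivative f' s) (at s)"
  shows "f s + f' s * (h - s) \<le> f h"
  using convex_on_imp_above_tangent[OF assms(1) connected_UNIV, of s h "f' s"] assms(2)[of s]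
  by simp




locale ogd_setting =
  fixes X :: "(real ^ 'd) set" and Y :: "real set"
    and \<rho> :: "((real ^ 'd) \<times> real) measure"
    and K :: "real ^ 'd \<Rightarrow> real ^ 'd \<Rightarrow> real"
    and \<Phi> :: "real ^ 'd \<Rightarrow> 'h::{real_inner, complete_space}"
    and \<phi> \<phi>' :: "real \<Rightarrow> real \<Rightarrow> real"
    and \<eta> :: "nat \<Rightarrow> real"
    and \<alpha> L :: real
    and wH :: 'h
  assumes rho_prob: "prob_space \<rho>"
    and rho_sets: "sets \<rho> = sets (restrict_space borel (X \<times> Y))"
    and K_feature: "\<forall>x\<in>X. \<forall>x'\<in>X. K x x' = inner (\<Phi> x) (\<Phi> x')"
    and K_cont: "continuous_on (X \<times> X) (\<lambda>(x, x'). K x x')"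
    and kappa_fin: "\<exists>\<kappa>. \<forall>x\<in>X. sqrt (K x x) \<le> \<kappa>"
    and phi_nonneg: "\<forall>y\<in>Y. \<forall>s. 0 \<le> \<phi> y s"
    and phi_meas: "(\<lambda>(y, s). \<phi> y s) \<in> borel_measurable (restrict_space borel (Y \<times> UNIV))"
    and phi_convex: "\<forall>y\<in>Y. convex_on UNIV (\<phi> y)"
    and phi_deriv: "\<forall>y\<in>Y. \<forall>s. (\<phi> y has_real_derivative \<phi>' y s) (at s)"
    and alpha: "0 < \<alpha>" "\<alpha> \<le> 1" and L_pos: "0 < L"
    and phi_hoelder: "\<forall>y\<in>Y. \<forall>s s'. \<bar>\<phi>' y s - \<phi>' y s'\<bar> \<le> L * \<bar>s - s'\<bar> powr \<alpha>"
    and fH_min: "\<forall>w. gen_err \<rho> \<phi> (rkhs_fun \<Phi> wH) \<le> gen_err \<rho> \<phi> (rkhs_fun \<Phi> w)"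
    and bdd0: "\<exists>B. \<forall>y\<in>Y. \<phi> y 0 \<le> B"
    and eta_pos: "\<forall>t\<ge>1. 0 < \<eta> t"
begin

abbreviation "M \<equiv> PiM UNIV (\<lambda>_::nat. \<rho>)"
abbreviation "W t \<omega> \<equiv> ogd \<Phi> \<phi>' \<eta> \<omega> t"

lemma space_rho: "space \<rho> = X \<times> Y"
  using sets_eq_imp_space_eq[OF rho_sets] by (simp add: space_restrict_space)

lemma space_M: "\<omega> \<in> space M \<longleftrightarrow> (\<forall>i. \<omega> i \<in> X \<times> Y)"
  by (auto simp: space_PiM space_rho)

lemma inM: "\<omega> \<in> space M \<Longrightarrow> fst (\<omega> i) \<in> X \<and> snd (\<omega> i) \<in> Y"
  using space_M by (metis mem_Times_iff)

definition kap where "kap = max 0 (SOME \<kappa>. \<forall>x\<in>X. sqrt (K x x) \<le> \<kappa>)"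

lemma kap_nn: "0 \<le> kap" unfolding kap_def by simp

lemma norm_Phi: "x \<in> X \<Longrightarrow> norm (\<Phi> x) \<le> kap"
proof -
  assume x: "x \<in> X"
  have "\<forall>x\<in>X. sqrt (K x x) \<le> (SOME \<kappa>. \<forall>x\<in>X. sqrt (K x x) \<le> \<kappa>)"
    using kappa_fin by (rule someI_ex)
  hence "sqrt (K x x) \<le> kap" using x unfolding kap_def by force
  moreover have "norm (\<Phi> x) = sqrt (K x x)" using x K_feature by (simp add: norm_eq_sqrt_inner)
  ultimately show ?thesis by simp
qed

lemma norm_Phi_sq: "x \<in> X \<Longrightarrow> (norm (\<Phi> x))\<^sup>2 \<le> kap\<^sup>2"
  using norm_Phi by (simp add: power_mono)

lemma grad_sq': "y \<in> Y \<Longrightarrow> (\<phi>' y s)\<^sup>2 \<le> 4 * L\<^sup>2 + 4 * L * \<phi> y s"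
  using grad_sq[of "\<phi> y" "\<phi>' y" L \<alpha> s] phi_deriv phi_hoelder alpha L_pos phi_nonneg by blast

lemma tangent': "y \<in> Y \<Longrightarrow> \<phi> y s + \<phi>' y s * (h - s) \<le> \<phi> y h"
  using tangent_ineq[of "\<phi> y" "\<phi>' y" s h] phi_deriv phi_convex by blast

definition B0 where "B0 = max 0 (SOME B. \<forall>y\<in>Y. \<phi> y 0 \<le> B)"

lemma B0: "y \<in> Y \<Longrightarrow> \<phi> y 0 \<le> B0" "0 \<le> B0"
proof -
  have "\<forall>y\<in>Y. \<phi> y 0 \<le> (SOME B. \<forall>y\<in>Y. \<phi> y 0 \<le> B)" using bdd0 by (rule someI_ex)
  thus "y \<in> Y \<Longrightarrow> \<phi> y 0 \<le> B0" unfolding B0_def by force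
qed (simp add: B0_def)

definition G0 where "G0 = 1 + 4 * L\<^sup>2 + 4 * L * B0"

lemma powr_le_1_plus: "\<bar>s::real\<bar> powr \<alpha> \<le> 1 + \<bar>s\<bar>"
proof (cases "\<bar>s\<bar> \<le> 1")
  case True
  hence "\<bar>s\<bar> powr \<alpha> \<le> 1 powr \<alpha>" using alpha by (intro powr_mono2) auto
  thus ?thesis by simp
next
  case False
  hence "\<bar>s\<bar> powr \<alpha> \<le> \<bar>s\<bar> powr 1" using alpha by (intro powr_mono) auto
  thus ?thesis using False by simp
qed

lemma grad_bound: "y \<in> Y \<Longrightarrow> \<bar>\<phi>' y s\<bar> \<le> G0 + L * (1 + \<bar>s\<bar>)"
proof -
  assume y: "y \<in> Y"
  have "(\<phi>' y 0)\<^sup>2 \<le> 4 * L\<^sup>2 + 4 * L * B0"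
  proof -
    have "4 * L * \<phi> y 0 \<le> 4 * L * B0" using B0(1)[OF y] L_pos by simp
    thus ?thesis using grad_sq'[OF y, of 0] by linarith
  qed
  moreover have "\<bar>\<phi>' y 0\<bar> \<le> 1 + (\<phi>' y 0)\<^sup>2"
  proof (cases "\<bar>\<phi>' y 0\<bar> \<le> 1")
    case True thus ?thesis using zero_le_power2[of "\<phi>' y 0"] by linarith
  next
    case False
    hence "\<bar>\<phi>' y 0\<bar> * 1 \<le> \<bar>\<phi>' y 0\<bar> * \<bar>\<phi>' y 0\<bar>" by (intro mult_left_mono) auto
    thus ?thesis by (simp add: power2_eq_square)
  qed
  ultimately have g0: "\<bar>\<phi>' y 0\<bar> \<le> G0" unfolding G0_def by simp
  have "\<bar>\<phi>' y s - \<phi>' y 0\<bar> \<le> L * \<bar>s - 0\<bar> powr \<alpha>" using phi_hoelder y by blast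
  also have "\<dots> \<le> L * (1 + \<bar>s\<bar>)" using powr_le_1_plus[of s] L_pos by simp
  finally show ?thesis using g0 by simp
qed

lemma loss_bound: "y \<in> Y \<Longrightarrow> \<phi> y s \<le> B0 + \<bar>\<phi>' y s\<bar> * \<bar>s\<bar>"
proof -
  assume y: "y \<in> Y"
  have "\<phi> y s + \<phi>' y s * (0 - s) \<le> \<phi> y 0" by (rule tangent'[OF y])
  moreover have "- (\<phi>' y s * (0 - s)) \<le> \<bar>\<phi>' y s\<bar> * \<bar>s\<bar>"
    by (simp add: abs_mult[symmetric])
  ultimately show ?thesis using B0(1)[OF y] by linarith
qed

lemma W_dep: "(\<forall>s<t. \<omega> s = \<omega>' s) \<Longrightarrow> W t \<omega> = W t \<omega>'"
  by (induction t) auto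

lemma W_bound: "\<exists>R\<ge>0. \<forall>\<omega>\<in>space M. norm (W t \<omega>) \<le> R"
proof (induction t)
  case 0 thus ?case by auto
next
  case (Suc t)
  then obtain R where R: "R \<ge> 0" "\<And>\<omega>. \<omega> \<in> space M \<Longrightarrow> norm (W t \<omega>) \<le> R" by blast
  show ?case
  proof (cases "t = 0")
    case True thus ?thesis by auto
  next
    case False
    define R' where "R' = R + \<bar>\<eta> t\<bar> * (G0 + L * (1 + R * kap)) * kap"
    have G0nn: "0 \<le> G0" unfolding G0_def using B0(2) L_pos by simp
    show ?thesis
    proof (intro exI[of _ R'] conjI ballI)
      show "0 \<le> R'" unfolding R'_def using R(1) G0nn L_pos kap_nn by simp
      fix \<omega> assume \<omega>: "\<omega> \<in> space M"
      define x where "x = fst (\<omega> t)"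
      define y where "y = snd (\<omega> t)"
      have x: "x \<in> X" and y: "y \<in> Y" using inM[OF \<omega>] x_def y_def by auto
      define s where "s = inner (W t \<omega>) (\<Phi> x)"
      have "\<bar>s\<bar> \<le> norm (W t \<omega>) * norm (\<Phi> x)" unfolding s_def by (rule Cauchy_Schwarz_ineq2)
      also have "\<dots> \<le> R * kap" using R(2)[OF \<omega>] norm_Phi[OF x] R(1) by (intro mult_mono) auto
      finally have sb: "\<bar>s\<bar> \<le> R * kap" .
      have gb: "\<bar>\<phi>' y s\<bar> \<le> G0 + L * (1 + R * kap)"
      proof -
        have "L * (1 + \<bar>s\<bar>) \<le> L * (1 + R * kap)" using sb L_pos by simp
        thus ?thesis using grad_bound[OF y, of s] by linarith
      qed
      have eqS: "W (Suc t) \<omega> = W t \<omega> - (\<eta> t * \<phi>' y s) *\<^sub>R \<Phi> x"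
        using False by (simp add: x_def y_def s_def)
      have tri: "norm (W t \<omega> - (\<eta> t * \<phi>' y s) *\<^sub>R \<Phi> x) \<le> norm (W t \<omega>) + norm ((\<eta> t * \<phi>' y s) *\<^sub>R \<Phi> x)"
        by (rule norm_triangle_ineq4)
      have nsc: "norm ((\<eta> t * \<phi>' y s) *\<^sub>R \<Phi> x) = \<bar>\<eta> t\<bar> * \<bar>\<phi>' y s\<bar> * norm (\<Phi> x)"
        by (simp add: abs_mult)
      have "norm (W (Suc t) \<omega>) \<le> norm (W t \<omega>) + \<bar>\<eta> t\<bar> * \<bar>\<phi>' y s\<bar> * norm (\<Phi> x)"
        unfolding eqS using tri nsc by linarith
      also have "\<dots> \<le> R + \<bar>\<eta> t\<bar> * (G0 + L * (1 + R * kap)) * kap"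
      proof -
        have f1: "\<bar>\<eta> t\<bar> * \<bar>\<phi>' y s\<bar> \<le> \<bar>\<eta> t\<bar> * (G0 + L * (1 + R * kap))"
          using gb by (rule mult_left_mono) simp
        have f2: "0 \<le> \<bar>\<eta> t\<bar> * (G0 + L * (1 + R * kap))"
          using G0nn L_pos R(1) kap_nn by simp
        have "\<bar>\<eta> t\<bar> * \<bar>\<phi>' y s\<bar> * norm (\<Phi> x) \<le> \<bar>\<eta> t\<bar> * (G0 + L * (1 + R * kap)) * kap"
          by (rule mult_mono[OF f1 norm_Phi[OF x] f2 norm_ge_zero])
        thus ?thesis using R(2)[OF \<omega>] by linarith
      qed
      finally show "norm (W (Suc t) \<omega>) \<le> R'" unfolding R'_def .
    qed
  qed
qed

lemma one_step:
  assumes t: "t \<ge> 1" and \<omega>: "\<omega> \<in> space M"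
  defines "x \<equiv> fst (\<omega> t)" and "y \<equiv> snd (\<omega> t)"
  defines "s \<equiv> inner (W t \<omega>) (\<Phi> x)"
  shows "(norm (W (Suc t) \<omega> - wH))\<^sup>2 \<le> (norm (W t \<omega> - wH))\<^sup>2
          + 2 * \<eta> t * (\<phi> y (inner wH (\<Phi> x)) - \<phi> y s)
          + (\<eta> t)\<^sup>2 * kap\<^sup>2 * (4 * L\<^sup>2 + 4 * L * \<phi> y s)"
proof -
  have x: "x \<in> X" and y: "y \<in> Y" using inM[OF \<omega>] x_def y_def by auto
  define v where "v = W t \<omega> - wH"
  define p where "p = \<Phi> x"
  define h where "h = inner wH p"
  define c where "c = \<eta> t * \<phi>' y s"
  have et: "0 < \<eta> t" using eta_pos t by auto
  have "W (Suc t) \<omega> = W t \<omega> - c *\<^sub>R p"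
    using t by (simp add: x_def y_def s_def c_def p_def)
  hence eqW: "W (Suc t) \<omega> - wH = v - c *\<^sub>R p" unfolding v_def by simp
  have "(norm (v - c *\<^sub>R p))\<^sup>2 = (norm v)\<^sup>2 - 2 * c * inner v p + c\<^sup>2 * (norm p)\<^sup>2"
    unfolding power2_norm_eq_inner by (simp add: inner_diff_left inner_diff_right algebra_simps inner_commute power2_eq_square)
  hence "(norm (W (Suc t) \<omega> - wH))\<^sup>2 = (norm v)\<^sup>2 - 2 * c * inner v p + c\<^sup>2 * (norm p)\<^sup>2"
    by (simp only: eqW)
  moreover have "inner v p = s - h" unfolding v_def s_def h_def p_def by (simp add: inner_diff_left)
  ultimately have nrm: "(norm (W (Suc t) \<omega> - wH))\<^sup>2 = (norm v)\<^sup>2 - 2 * c * (s - h) + c\<^sup>2 * (norm p)\<^sup>2"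
    by simp
  moreover have "- 2 * c * (s - h) \<le> 2 * \<eta> t * (\<phi> y h - \<phi> y s)"
  proof -
    have "\<phi>' y s * (h - s) \<le> \<phi> y h - \<phi> y s" using tangent'[OF y, of s h] by simp
    hence "\<eta> t * (\<phi>' y s * (h - s)) \<le> \<eta> t * (\<phi> y h - \<phi> y s)" using et by (intro mult_left_mono) auto
    thus ?thesis unfolding c_def by (simp add: algebra_simps)
  qed
  moreover have "c\<^sup>2 * (norm p)\<^sup>2 \<le> (\<eta> t)\<^sup>2 * kap\<^sup>2 * (4 * L\<^sup>2 + 4 * L * \<phi> y s)"
  proof -
    have "(\<phi>' y s)\<^sup>2 * (norm p)\<^sup>2 \<le> (4 * L\<^sup>2 + 4 * L * \<phi> y s) * kap\<^sup>2"
      using grad_sq'[OF y, of s] norm_Phi_sq[OF x] unfolding p_def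
      by (intro mult_mono) (auto intro: order_trans[OF zero_le_power2])
    hence "(\<eta> t)\<^sup>2 * ((\<phi>' y s)\<^sup>2 * (norm p)\<^sup>2) \<le> (\<eta> t)\<^sup>2 * ((4 * L\<^sup>2 + 4 * L * \<phi> y s) * kap\<^sup>2)"
      by (intro mult_left_mono) auto
    thus ?thesis unfolding c_def by (simp add: power_mult_distrib algebra_simps)
  qed
  ultimately show ?thesis using nrm unfolding v_def h_def p_def by linarith
qed

end



context ogd_setting begin

lemma meas_rho_iff: "f \<in> measurable \<rho> N \<longleftrightarrow> f \<in> measurable (restrict_space borel (X \<times> Y)) N"
  using measurable_cong_sets[OF rho_sets refl, of N] by simp

lemma fst_meas[measurable]: "fst \<in> borel_measurable \<rho>"
  unfolding meas_rho_iff
  by (intro measurable_restrict_space1 borel_measurable_continuous_onI continuous_intros)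

lemma snd_meas[measurable]: "snd \<in> borel_measurable \<rho>"
  unfolding meas_rho_iff
  by (intro measurable_restrict_space1 borel_measurable_continuous_onI continuous_intros)

lemma phi_comp_meas:
  assumes f: "f \<in> borel_measurable N" and g: "g \<in> borel_measurable N"
    and fY: "\<And>x. x \<in> space N \<Longrightarrow> f x \<in> Y"
  shows "(\<lambda>x. \<phi> (f x) (g x)) \<in> borel_measurable N"
proof -
  have "(\<lambda>x. (f x, g x)) \<in> measurable N (restrict_space borel (Y \<times> UNIV))"
    using fY by (intro measurable_restrict_space2 borel_measurable_Pair f g) auto
  from measurable_comp[OF this phi_meas] show ?thesis by (simp add: o_def)
qed

lemma dphi_meas: "(\<lambda>(y, s). \<phi>' y s) \<in> borel_measurable (restrict_space borel (Y \<times> UNIV))"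
proof (rule borel_measurable_LIMSEQ_real[where u="\<lambda>n p. (\<phi> (fst p) (snd p + inverse (real (Suc n))) - \<phi> (fst p) (snd p)) / inverse (real (Suc n))"])
  fix p :: "real \<times> real" assume p: "p \<in> space (restrict_space borel (Y \<times> UNIV))"
  hence y: "fst p \<in> Y" by (auto simp: space_restrict_space)
  have "(\<lambda>h. (\<phi> (fst p) (snd p + h) - \<phi> (fst p) (snd p)) / h) \<midarrow>0\<rightarrow> \<phi>' (fst p) (snd p)"
    using phi_deriv y DERIV_def by blast
  moreover have "filterlim (\<lambda>n. inverse (real (Suc n))) (at 0) sequentially"
    using LIMSEQ_inverse_real_of_nat by (auto simp: filterlim_at intro!: always_eventually)
  ultimately have "(\<lambda>n. (\<phi> (fst p) (snd p + inverse (real (Suc n))) - \<phi> (fst p) (snd p)) / inverse (real (Suc n)))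
      \<longlonglongrightarrow> \<phi>' (fst p) (snd p)"
    by (rule filterlim_compose)
  thus "(\<lambda>n. (\<phi> (fst p) (snd p + inverse (real (Suc n))) - \<phi> (fst p) (snd p)) / inverse (real (Suc n)))
      \<longlonglongrightarrow> (case p of (y, s) \<Rightarrow> \<phi>' y s)" by (simp add: case_prod_beta)
next
  fix n
  let ?c = "inverse (real (Suc n))"
  have m1: "(\<lambda>p. \<phi> (fst p) (snd p + ?c)) \<in> borel_measurable (restrict_space borel (Y \<times> (UNIV::real set)))"
    by (intro phi_comp_meas measurable_restrict_space1 borel_measurable_continuous_onI continuous_intros)
       (auto simp: space_restrict_space)
  have m2: "(\<lambda>p. \<phi> (fst p) (snd p)) \<in> borel_measurable (restrict_space borel (Y \<times> (UNIV::real set)))"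
    by (intro phi_comp_meas measurable_restrict_space1 borel_measurable_continuous_onI continuous_intros)
       (auto simp: space_restrict_space)
  show "(\<lambda>p. (\<phi> (fst p) (snd p + ?c) - \<phi> (fst p) (snd p)) / ?c) \<in> borel_measurable (restrict_space borel (Y \<times> UNIV))"
    using m1 m2 by measurable
qed

lemma dphi_comp_meas:
  assumes f: "f \<in> borel_measurable N" and g: "g \<in> borel_measurable N"
    and fY: "\<And>x. x \<in> space N \<Longrightarrow> f x \<in> Y"
  shows "(\<lambda>x. \<phi>' (f x) (g x)) \<in> borel_measurable N"
proof -
  have "(\<lambda>x. (f x, g x)) \<in> measurable N (restrict_space borel (Y \<times> UNIV))"
    using fY by (intro measurable_restrict_space2 borel_measurable_Pair f g) auto
  from measurable_comp[OF this dphi_meas] show ?thesis by (simp add: o_def)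
qed

lemma kk_meas: "(\<lambda>p. inner (\<Phi> (fst (fst p))) (\<Phi> (fst (snd p)))) \<in> borel_measurable (\<rho> \<Otimes>\<^sub>M \<rho>)"
proof -
  have "(\<lambda>p. (fst (fst p), fst (snd p))) \<in> measurable (\<rho> \<Otimes>\<^sub>M \<rho>) (restrict_space borel (X \<times> X))"
  proof (rule measurable_restrict_space2)
    show "(\<lambda>p. (fst (fst p), fst (snd p))) \<in> space (\<rho> \<Otimes>\<^sub>M \<rho>) \<rightarrow> X \<times> X"
      by (auto simp: space_pair_measure space_rho)
    show "(\<lambda>p. (fst (fst p), fst (snd p))) \<in> borel_measurable (\<rho> \<Otimes>\<^sub>M \<rho>)"
      by measurable
  qed
  from measurable_comp[OF this borel_measurable_continuous_on_restrict[OF K_cont]]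
  have "(\<lambda>p. K (fst (fst p)) (fst (snd p))) \<in> borel_measurable (\<rho> \<Otimes>\<^sub>M \<rho>)" by (simp add: o_def)
  thus ?thesis
    by (rule measurable_cong[THEN iffD1, rotated])
       (auto simp: space_pair_measure space_rho K_feature)
qed

lemma Phi_cont: "continuous_on X \<Phi>"
  unfolding continuous_on_def
proof
  fix x0 assume x0: "x0 \<in> X"
  have c1: "continuous_on X (\<lambda>x. K x x)"
    by (rule continuous_on_compose2[OF K_cont, of X "\<lambda>x. (x, x)", simplified])
       (auto intro: continuous_intros)
  have c2: "continuous_on X (\<lambda>x. K x x0)"
    by (rule continuous_on_compose2[OF K_cont, of X "\<lambda>x. (x, x0)", simplified])
       (auto intro: continuous_intros x0)
  have "((\<lambda>x. K x x - 2 * K x x0 + K x0 x0) \<longlongrightarrow> K x0 x0 - 2 * K x0 x0 + K x0 x0) (at x0 within X)"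
    using c1 c2 x0 unfolding continuous_on_def by (intro tendsto_intros) auto
  hence "((\<lambda>x. sqrt (K x x - 2 * K x x0 + K x0 x0)) \<longlongrightarrow> sqrt 0) (at x0 within X)"
    by (intro tendsto_intros) simp
  hence "((\<lambda>x. sqrt (K x x - 2 * K x x0 + K x0 x0)) \<longlongrightarrow> 0) (at x0 within X)" by simp
  moreover have "eventually (\<lambda>x. sqrt (K x x - 2 * K x x0 + K x0 x0) = norm (\<Phi> x - \<Phi> x0)) (at x0 within X)"
  proof -
    have "sqrt (K x x - 2 * K x x0 + K x0 x0) = norm (\<Phi> x - \<Phi> x0)" if "x \<in> X" for x
      using that x0 K_feature
      by (simp add: norm_eq_sqrt_inner inner_diff_left inner_diff_right inner_commute)
    thus ?thesis by (auto simp: eventually_at_filter)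
  qed
  ultimately have "((\<lambda>x. norm (\<Phi> x - \<Phi> x0)) \<longlongrightarrow> 0) (at x0 within X)"
    by (rule tendsto_cong[THEN iffD1, rotated])
  thus "(\<Phi> \<longlongrightarrow> \<Phi> x0) (at x0 within X)"
    by (simp add: tendsto_norm_zero_iff LIM_zero_iff)
qed

lemma fH_meas: "(\<lambda>z. inner wH (\<Phi> (fst z))) \<in> borel_measurable \<rho>"
  unfolding meas_rho_iff
proof (rule borel_measurable_continuous_on_restrict)
  show "continuous_on (X \<times> Y) (\<lambda>z. inner wH (\<Phi> (fst z)))"
    by (rule continuous_on_inner[OF continuous_on_const continuous_on_compose2[OF Phi_cont]])
       (auto intro: continuous_intros)
qed

end



context ogd_setting begin

lemma G0_nn: "0 \<le> G0" unfolding G0_def using B0(2) L_pos by simp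

lemma M_prob: "prob_space M"
  by (rule prob_space_PiM) (rule rho_prob)

lemma pair_ps: "pair_prob_space \<rho> M"
  using rho_prob M_prob
  by (simp add: pair_prob_space_def pair_sigma_finite_def prob_space_imp_sigma_finite)

lemma comp_meas: "(\<lambda>\<omega>. \<omega> t) \<in> measurable M \<rho>"
  by (rule measurable_component_singleton) simp

lemma U_meas: "(\<lambda>p. inner (W t (fst p)) (\<Phi> (fst (snd p)))) \<in> borel_measurable (M \<Otimes>\<^sub>M \<rho>)"
proof (induction t)
  case 0 thus ?case by simp
next
  case (Suc t)
  show ?case
  proof (cases "t = 0")
    case True thus ?thesis by simp
  next
    case False
    define U :: "((nat \<Rightarrow> (real^'d) \<times> real) \<times> (real^'d) \<times> real) \<Rightarrow> real"
      where "U = (\<lambda>p. inner (W t (fst p)) (\<Phi> (fst (snd p))))"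
    have U: "U \<in> borel_measurable (M \<Otimes>\<^sub>M \<rho>)" using Suc.IH unfolding U_def .
    have pm: "(\<lambda>p. (fst p, fst p t)) \<in> measurable (M \<Otimes>\<^sub>M \<rho>) (M \<Otimes>\<^sub>M \<rho>)"
      by (intro measurable_Pair measurable_fst measurable_compose[OF measurable_fst comp_meas])
    have V: "(\<lambda>p. U (fst p, fst p t)) \<in> borel_measurable (M \<Otimes>\<^sub>M \<rho>)"
      using measurable_compose[OF pm U] .
    have Y1: "(\<lambda>p. snd (fst p t)) \<in> borel_measurable (M \<Otimes>\<^sub>M \<rho>)"
      by (intro measurable_compose[OF measurable_compose[OF measurable_fst comp_meas] snd_meas])
    have D1: "(\<lambda>p. \<phi>' (snd (fst p t)) (U (fst p, fst p t))) \<in> borel_measurable (M \<Otimes>\<^sub>M \<rho>)"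
      by (rule dphi_comp_meas[OF Y1 V]) (auto simp: space_pair_measure dest: inM)
    have pm2: "(\<lambda>p. (fst p t, snd p)) \<in> measurable (M \<Otimes>\<^sub>M \<rho>) (\<rho> \<Otimes>\<^sub>M \<rho>)"
      by (intro measurable_Pair measurable_snd measurable_compose[OF measurable_fst comp_meas])
    have K1: "(\<lambda>p. inner (\<Phi> (fst (fst p t))) (\<Phi> (fst (snd p)))) \<in> borel_measurable (M \<Otimes>\<^sub>M \<rho>)"
      using measurable_compose[OF pm2 kk_meas] by simp
    have eq: "(\<lambda>p. inner (W (Suc t) (fst p)) (\<Phi> (fst (snd p)))) =
       (\<lambda>p. U p - (\<eta> t * \<phi>' (snd (fst p t)) (U (fst p, fst p t))) * inner (\<Phi> (fst (fst p t))) (\<Phi> (fst (snd p))))"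
      using False by (auto simp: U_def inner_diff_left fun_eq_iff)
    show ?thesis unfolding eq using U D1 K1 by measurable
  qed
qed

definition gg where "gg t \<omega> = \<phi> (snd (\<omega> t)) (inner (W t \<omega>) (\<Phi> (fst (\<omega> t))))"
definition hh where "hh t \<omega> = \<phi> (snd (\<omega> t)) (inner wH (\<Phi> (fst (\<omega> t))))"

lemma gg_meas: "gg t \<in> borel_measurable M"
proof -
  have pm: "(\<lambda>\<omega>. (\<omega>, \<omega> t)) \<in> measurable M (M \<Otimes>\<^sub>M \<rho>)"
    by (intro measurable_Pair measurable_ident_sets[OF refl] comp_meas)
  have V: "(\<lambda>\<omega>. inner (W t \<omega>) (\<Phi> (fst (\<omega> t)))) \<in> borel_measurable M"
    using measurable_compose[OF pm U_meas[of t]] by simp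
  show ?thesis unfolding gg_def
    by (rule phi_comp_meas[OF measurable_compose[OF comp_meas snd_meas] V]) (auto dest: inM)
qed

lemma hh_meas: "hh t \<in> borel_measurable M"
  unfolding hh_def
  by (rule phi_comp_meas[OF measurable_compose[OF comp_meas snd_meas]
        measurable_compose[OF comp_meas fH_meas]]) (auto dest: inM)

lemma gg_bound: "\<exists>B. \<forall>\<omega>\<in>space M. 0 \<le> gg t \<omega> \<and> gg t \<omega> \<le> B"
proof -
  obtain R where R: "R \<ge> 0" "\<And>\<omega>. \<omega> \<in> space M \<Longrightarrow> norm (W t \<omega>) \<le> R" using W_bound by blast
  show ?thesis
  proof (intro exI[of _ "B0 + (G0 + L * (1 + R * kap)) * (R * kap)"] ballI conjI)
    fix \<omega> assume \<omega>: "\<omega> \<in> space M"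
    have x: "fst (\<omega> t) \<in> X" and y: "snd (\<omega> t) \<in> Y" using inM[OF \<omega>] by auto
    define s where "s = inner (W t \<omega>) (\<Phi> (fst (\<omega> t)))"
    have "\<bar>s\<bar> \<le> norm (W t \<omega>) * norm (\<Phi> (fst (\<omega> t)))" unfolding s_def by (rule Cauchy_Schwarz_ineq2)
    also have "\<dots> \<le> R * kap" using R(2)[OF \<omega>] norm_Phi[OF x] R(1) by (intro mult_mono) auto
    finally have sb: "\<bar>s\<bar> \<le> R * kap" .
    have gb: "\<bar>\<phi>' (snd (\<omega> t)) s\<bar> \<le> G0 + L * (1 + R * kap)"
    proof -
      have "L * (1 + \<bar>s\<bar>) \<le> L * (1 + R * kap)" using sb L_pos by simp
      thus ?thesis using grad_bound[OF y, of s] by linarith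
    qed
    have "\<bar>\<phi>' (snd (\<omega> t)) s\<bar> * \<bar>s\<bar> \<le> (G0 + L * (1 + R * kap)) * (R * kap)"
      using gb sb G0_nn L_pos kap_nn R(1) by (intro mult_mono) auto
    thus "gg t \<omega> \<le> B0 + (G0 + L * (1 + R * kap)) * (R * kap)"
      using loss_bound[OF y, of s] unfolding gg_def s_def by linarith
    show "0 \<le> gg t \<omega>" unfolding gg_def using phi_nonneg y by blast
  qed
qed

lemma hh_bound: "\<exists>B. \<forall>\<omega>\<in>space M. 0 \<le> hh t \<omega> \<and> hh t \<omega> \<le> B"
proof -
  define R where "R = norm wH"
  show ?thesis
  proof (intro exI[of _ "B0 + (G0 + L * (1 + R * kap)) * (R * kap)"] ballI conjI)
    fix \<omega> assume \<omega>: "\<omega> \<in> space M"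
    have x: "fst (\<omega> t) \<in> X" and y: "snd (\<omega> t) \<in> Y" using inM[OF \<omega>] by auto
    define s where "s = inner wH (\<Phi> (fst (\<omega> t)))"
    have "\<bar>s\<bar> \<le> norm wH * norm (\<Phi> (fst (\<omega> t)))" unfolding s_def by (rule Cauchy_Schwarz_ineq2)
    also have "\<dots> \<le> R * kap" unfolding R_def using norm_Phi[OF x] by (intro mult_left_mono) auto
    finally have sb: "\<bar>s\<bar> \<le> R * kap" .
    have gb: "\<bar>\<phi>' (snd (\<omega> t)) s\<bar> \<le> G0 + L * (1 + R * kap)"
    proof -
      have "L * (1 + \<bar>s\<bar>) \<le> L * (1 + R * kap)" using sb L_pos by simp
      thus ?thesis using grad_bound[OF y, of s] by linarith
    qed
    have "\<bar>\<phi>' (snd (\<omega> t)) s\<bar> * \<bar>s\<bar> \<le> (G0 + L * (1 + R * kap)) * (R * kap)"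
      using gb sb G0_nn L_pos kap_nn norm_ge_zero[of wH] W_bound[of t] by (intro mult_mono) (auto simp: R_def)
    thus "hh t \<omega> \<le> B0 + (G0 + L * (1 + R * kap)) * (R * kap)"
      using loss_bound[OF y, of s] unfolding hh_def s_def by linarith
    show "0 \<le> hh t \<omega>" unfolding hh_def using phi_nonneg y by blast
  qed
qed

lemma bounded_integrable:
  fixes f :: "_ \<Rightarrow> real" and B :: real
  assumes "f \<in> borel_measurable M" and "\<forall>\<omega>\<in>space M. 0 \<le> f \<omega> \<and> f \<omega> \<le> B"
  shows "integrable M f"
proof -
  interpret prob_space M by (rule M_prob)
  show ?thesis
    by (rule integrable_const_bound[where B=B]) (use assms in auto)
qed

lemma gg_int: "integrable M (gg t)"
  using gg_bound[of t] bounded_integrable[OF gg_meas] by blast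

lemma hh_int: "integrable M (hh t)"
  using hh_bound[of t] bounded_integrable[OF hh_meas] by blast

end



context ogd_setting begin

lemma swap_int:
  fixes G :: "_ \<Rightarrow> real"
  assumes G: "integrable M G"
  shows "integral\<^sup>L M G = (\<integral>Z. (\<integral>z. G (Z(t := z)) \<partial>\<rho>) \<partial>M)"
    and "integrable M (\<lambda>Z. \<integral>z. G (Z(t := z)) \<partial>\<rho>)"
proof -
  interpret P: pair_prob_space \<rho> M by (rule pair_ps)
  have upd: "(\<lambda>p. (snd p)(t := fst p)) \<in> measurable (\<rho> \<Otimes>\<^sub>M M) M"
    by (rule measurable_fun_upd[where J=UNIV]) (auto intro: measurable_snd measurable_fst)
  have dist: "distr (\<rho> \<Otimes>\<^sub>M M) M (\<lambda>p. (snd p)(t := fst p)) = M"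
    using distr_pair_PiM_eq_PiM[of UNIV "\<lambda>_. \<rho>" t] rho_prob by (simp add: case_prod_beta')
  have Gm: "G \<in> borel_measurable M" using G by auto
  have int2: "integrable (\<rho> \<Otimes>\<^sub>M M) (\<lambda>p. G ((snd p)(t := fst p)))"
    using integrable_distr_eq[OF upd Gm] G dist by simp
  hence int2': "integrable (\<rho> \<Otimes>\<^sub>M M) (case_prod (\<lambda>z Z. G (Z(t := z))))"
    by (simp add: case_prod_beta')
  have "integral\<^sup>L M G = integral\<^sup>L (distr (\<rho> \<Otimes>\<^sub>M M) M (\<lambda>p. (snd p)(t := fst p))) G"
    by (simp add: dist)
  also have "\<dots> = (\<integral>p. G ((snd p)(t := fst p)) \<partial>(\<rho> \<Otimes>\<^sub>M M))" by (rule integral_distr[OF upd Gm])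
  also have "\<dots> = (\<integral>Z. (\<integral>z. G (Z(t := z)) \<partial>\<rho>) \<partial>M)"
    using P.integral_snd[OF int2'] by (simp add: case_prod_beta')
  finally show "integral\<^sup>L M G = (\<integral>Z. (\<integral>z. G (Z(t := z)) \<partial>\<rho>) \<partial>M)" .
  show "integrable M (\<lambda>Z. \<integral>z. G (Z(t := z)) \<partial>\<rho>)" using P.integrable_snd[OF int2'] .
qed

lemma gen_err_W: "(\<integral>z. gg t (Z(t := z)) \<partial>\<rho>) = gen_err \<rho> \<phi> (rkhs_fun \<Phi> (W t Z))"
proof -
  have "W t (Z(t := z)) = W t Z" for z by (rule W_dep) auto
  thus ?thesis unfolding gg_def gen_err_def rkhs_fun_def by simp
qed

lemma E_gg: "integral\<^sup>L M (gg t) = (\<integral>Z. gen_err \<rho> \<phi> (rkhs_fun \<Phi> (W t Z)) \<partial>M)"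
  and int_gen_err: "integrable M (\<lambda>Z. gen_err \<rho> \<phi> (rkhs_fun \<Phi> (W t Z)))"
  using swap_int[OF gg_int[of t], where t=t] unfolding gen_err_W by auto

lemma E_hh: "integral\<^sup>L M (hh t) = gen_err \<rho> \<phi> (rkhs_fun \<Phi> wH)"
proof -
  have hz: "(\<lambda>z. \<phi> (snd z) (inner wH (\<Phi> (fst z)))) \<in> borel_measurable \<rho>"
    by (rule phi_comp_meas[OF snd_meas fH_meas]) (auto simp: space_rho)
  have dist: "distr M \<rho> (\<lambda>\<omega>. \<omega> t) = \<rho>"
    using distr_PiM_component[of UNIV "\<lambda>_. \<rho>" t] rho_prob by simp
  have "gen_err \<rho> \<phi> (rkhs_fun \<Phi> wH) = integral\<^sup>L (distr M \<rho> (\<lambda>\<omega>. \<omega> t)) (\<lambda>z. \<phi> (snd z) (inner wH (\<Phi> (fst z))))"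
    unfolding dist gen_err_def rkhs_fun_def by simp
  also have "\<dots> = integral\<^sup>L M (hh t)"
    unfolding hh_def by (rule integral_distr[OF comp_meas hz])
  finally show ?thesis by simp
qed

end



context ogd_setting begin

definition "EH = gen_err \<rho> \<phi> (rkhs_fun \<Phi> wH)"
definition "Aexp t = (\<integral>\<omega>. gen_err \<rho> \<phi> (rkhs_fun \<Phi> (W t \<omega>)) \<partial>M)"
definition "Gt t = (\<integral>\<omega>. gen_err \<rho> \<phi> (rkhs_fun \<Phi> (W t \<omega>)) - gen_err \<rho> \<phi> (rkhs_fun \<Phi> wH) \<partial>M)"
definition "Dn t \<omega> = (norm (W t \<omega> - wH))\<^sup>2"
definition "Fn t \<omega> = 2 * \<eta> t * (hh t \<omega> - gg t \<omega>) + (\<eta> t)\<^sup>2 * kap\<^sup>2 * (4 * L\<^sup>2 + 4 * L * gg t \<omega>)"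

lemma int_const_M: "(\<integral>\<omega>. (c::real) \<partial>M) = c"
proof -
  interpret prob_space M by (rule M_prob)
  show ?thesis by (simp add: prob_space)
qed

lemma M_space1: "measure M (space M) = 1"
  using prob_space.prob_space[OF M_prob] by simp

lemma int_const_int: "integrable M (\<lambda>\<omega>. (c::real))"
proof -
  interpret prob_space M by (rule M_prob)
  show ?thesis by simp
qed

lemma Gt_eq: "Gt t = Aexp t - EH"
  unfolding Gt_def Aexp_def EH_def
  by (simp add: Bochner_Integration.integral_diff[OF int_gen_err int_const_int] int_const_M M_space1)

lemma Gt_nn: "0 \<le> Gt t"
  unfolding Gt_def by (rule Bochner_Integration.integral_nonneg) (use fH_min in auto)

lemma EH_nn: "0 \<le> EH"
proof -
  have "EH = integral\<^sup>L M (hh 1)" using E_hh[of 1] unfolding EH_def by simp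
  also have "\<dots> \<ge> 0" by (rule Bochner_Integration.integral_nonneg) (use hh_bound[of 1] in auto)
  finally show ?thesis .
qed

lemma step_D: "t \<ge> 1 \<Longrightarrow> \<omega> \<in> space M \<Longrightarrow> Dn (Suc t) \<omega> \<le> Dn t \<omega> + Fn t \<omega>"
  using one_step[of t \<omega>] unfolding Dn_def Fn_def gg_def hh_def by (simp add: algebra_simps)

lemma tele_D:
  assumes "1 \<le> T0" "T0 \<le> T" "\<omega> \<in> space M"
  shows "Dn (Suc T) \<omega> \<le> Dn T0 \<omega> + (\<Sum>t=T0..T. Fn t \<omega>)"
  using assms(2)
proof (induction T rule: dec_induct)
  case base thus ?case using step_D[OF assms(1) assms(3)] by simp
next
  case (step n)
  have "Dn (Suc (Suc n)) \<omega> \<le> Dn (Suc n) \<omega> + Fn (Suc n) \<omega>"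
    using step_D[of "Suc n" \<omega>] assms(3) by simp
  also have "\<dots> \<le> Dn T0 \<omega> + (\<Sum>t=T0..n. Fn t \<omega>) + Fn (Suc n) \<omega>" using step.IH by simp
  also have "\<dots> = Dn T0 \<omega> + (\<Sum>t=T0..Suc n. Fn t \<omega>)" using step.hyps by simp
  finally show ?case .
qed

lemma Dn_bound: "\<exists>Rb\<ge>0. \<forall>\<omega>\<in>space M. Dn t \<omega> \<le> Rb"
proof -
  obtain R where R: "R \<ge> 0" "\<And>\<omega>. \<omega> \<in> space M \<Longrightarrow> norm (W t \<omega>) \<le> R" using W_bound by blast
  show ?thesis
  proof (intro exI[of _ "(R + norm wH)\<^sup>2"] conjI ballI)
    fix \<omega> assume \<omega>: "\<omega> \<in> space M"
    have "norm (W t \<omega> - wH) \<le> R + norm wH"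
      using norm_triangle_ineq4[of "W t \<omega>" wH] R(2)[OF \<omega>] by linarith
    thus "Dn t \<omega> \<le> (R + norm wH)\<^sup>2" unfolding Dn_def by (intro power_mono) auto
  qed simp
qed

definition "c1 t = 2 * \<eta> t"
definition "c2 t = (\<eta> t)\<^sup>2 * kap\<^sup>2 * (4 * L) - 2 * \<eta> t"
definition "c3 t = (\<eta> t)\<^sup>2 * kap\<^sup>2 * (4 * L\<^sup>2)"

lemma Fn_alt: "Fn t \<omega> = c1 t * hh t \<omega> + c2 t * gg t \<omega> + c3 t"
  unfolding Fn_def c1_def c2_def c3_def by (simp add: algebra_simps)

lemma Fn_int: "integrable M (Fn t)"
  unfolding Fn_alt[abs_def] by (simp add: gg_int hh_int int_const_int)

lemma Fn_integral: "integral\<^sup>L M (Fn t) = c1 t * EH + c2 t * Aexp t + c3 t"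
proof -
  have "integral\<^sup>L M (Fn t) = (\<integral>\<omega>. c1 t * hh t \<omega> + c2 t * gg t \<omega> + c3 t \<partial>M)"
    unfolding Fn_alt ..
  also have "\<dots> = c1 t * integral\<^sup>L M (hh t) + c2 t * integral\<^sup>L M (gg t) + c3 t"
    using M_prob gg_int[of t] hh_int[of t]
    by (simp add: integral_add integral_mult_right_zero int_const_int int_const_M M_space1)
  finally show ?thesis using E_hh[of t] E_gg[of t] unfolding EH_def Aexp_def by simp
qed

lemma main_ineq:
  assumes T0: "1 \<le> T0" and small: "\<And>t. t \<ge> T0 \<Longrightarrow> 4 * L * kap\<^sup>2 * \<eta> t \<le> 1"
  shows "\<exists>Rb. \<forall>T\<ge>T0. (\<Sum>t=T0..T. \<eta> t * Gt t) \<le> Rb + (kap\<^sup>2 * (4 * L\<^sup>2 + 4 * L * EH)) * (\<Sum>t=T0..T. (\<eta> t)\<^sup>2)"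
proof -
  obtain Rb where Rb: "Rb \<ge> 0" "\<And>\<omega>. \<omega> \<in> space M \<Longrightarrow> Dn T0 \<omega> \<le> Rb" using Dn_bound by blast
  define C where "C = kap\<^sup>2 * (4 * L\<^sup>2 + 4 * L * EH)"
  show ?thesis unfolding C_def[symmetric]
  proof (intro exI[of _ Rb] allI impI)
    fix T assume T: "T0 \<le> T"
    have pw: "0 \<le> Rb + (\<Sum>t=T0..T. Fn t \<omega>)" if \<omega>: "\<omega> \<in> space M" for \<omega>
    proof -
      have "0 \<le> Dn (Suc T) \<omega>" unfolding Dn_def by simp
      also have "\<dots> \<le> Dn T0 \<omega> + (\<Sum>t=T0..T. Fn t \<omega>)" by (rule tele_D[OF T0 T \<omega>])
      finally show ?thesis using Rb(2)[OF \<omega>] by linarith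
    qed
    have "0 \<le> (\<integral>\<omega>. Rb + (\<Sum>t=T0..T. Fn t \<omega>) \<partial>M)"
      by (rule Bochner_Integration.integral_nonneg) (use pw in auto)
    also have "\<dots> = Rb + (\<Sum>t=T0..T. integral\<^sup>L M (Fn t))"
      using M_prob Fn_int
      by (simp add: integral_add integral_sum int_const_int int_const_M M_space1)
    also have "\<dots> = Rb + (\<Sum>t=T0..T. c1 t * EH + c2 t * Aexp t + c3 t)"
      by (simp add: Fn_integral)
    finally have I: "0 \<le> Rb + (\<Sum>t=T0..T. c1 t * EH + c2 t * Aexp t + c3 t)" .
    have trm: "c1 t * EH + c2 t * Aexp t + c3 t \<le> - (\<eta> t * Gt t) + C * (\<eta> t)\<^sup>2"
      if t: "t \<in> {T0..T}" for t
    proof -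
      have et: "0 < \<eta> t" using eta_pos t T0 by auto
      have eq: "c1 t * EH + c2 t * Aexp t + c3 t = ((\<eta> t)\<^sup>2 * kap\<^sup>2 * (4 * L) - 2 * \<eta> t) * Gt t + C * (\<eta> t)\<^sup>2"
        unfolding c1_def c2_def c3_def C_def Gt_eq by (simp add: algebra_simps power2_eq_square)
      have "(\<eta> t)\<^sup>2 * kap\<^sup>2 * (4 * L) = \<eta> t * (4 * L * kap\<^sup>2 * \<eta> t)" by (simp add: power2_eq_square algebra_simps)
      also have "\<dots> \<le> \<eta> t * 1" using small[of t] t et by (intro mult_left_mono) auto
      finally have "(\<eta> t)\<^sup>2 * kap\<^sup>2 * (4 * L) - 2 * \<eta> t \<le> - \<eta> t" by simp
      hence "((\<eta> t)\<^sup>2 * kap\<^sup>2 * (4 * L) - 2 * \<eta> t) * Gt t \<le> (- \<eta> t) * Gt t"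
        using Gt_nn[of t] by (rule mult_right_mono)
      thus ?thesis unfolding eq by simp
    qed
    have "(\<Sum>t=T0..T. c1 t * EH + c2 t * Aexp t + c3 t) \<le> (\<Sum>t=T0..T. - (\<eta> t * Gt t) + C * (\<eta> t)\<^sup>2)"
      by (rule sum_mono) (rule trm)
    also have "\<dots> = - (\<Sum>t=T0..T. \<eta> t * Gt t) + C * (\<Sum>t=T0..T. (\<eta> t)\<^sup>2)"
      by (simp add: sum.distrib sum_negf sum_distrib_left sum_subtractf)
    finally show "(\<Sum>t=T0..T. \<eta> t * Gt t) \<le> Rb + C * (\<Sum>t=T0..T. (\<eta> t)\<^sup>2)" using I by linarith
  qed
qed

lemma final:
  assumes eta_lim: "\<eta> \<longlonglongrightarrow> 0"
    and eta_div: "filterlim (\<lambda>T. \<Sum>t=1..T. \<eta> t) at_top sequentially"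
  shows "liminf (\<lambda>t. ereal (\<integral>\<omega>. gen_err \<rho> \<phi> (rkhs_fun \<Phi> (ogd \<Phi> \<phi>' \<eta> \<omega> t))
                                   - gen_err \<rho> \<phi> (rkhs_fun \<Phi> wH) \<partial>(PiM UNIV (\<lambda>_. \<rho>)))) = 0 \<and>
         (\<lambda>T. (\<Sum>t=1..T. \<eta> t * (\<integral>\<omega>. gen_err \<rho> \<phi> (rkhs_fun \<Phi> (ogd \<Phi> \<phi>' \<eta> \<omega> t))
                                   - gen_err \<rho> \<phi> (rkhs_fun \<Phi> wH) \<partial>(PiM UNIV (\<lambda>_. \<rho>))))
             / (\<Sum>t=1..T. \<eta> t)) \<longlonglongrightarrow> 0"
proof -
  define c where "c = 4 * L * kap\<^sup>2"
  have c: "0 \<le> c" unfolding c_def using L_pos by simp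
  have "(\<lambda>t. c * \<eta> t) \<longlonglongrightarrow> c * 0" by (intro tendsto_mult tendsto_const eta_lim)
  hence "eventually (\<lambda>t. dist (c * \<eta> t) 0 < 1) sequentially"
    using tendsto_iff[THEN iffD1, rule_format, of "\<lambda>t. c * \<eta> t" 0 sequentially 1] by simp
  then obtain N where N: "\<And>t. t \<ge> N \<Longrightarrow> dist (c * \<eta> t) 0 < 1" by (auto simp: eventually_sequentially)
  define T0 where "T0 = max N 1"
  have T0: "1 \<le> T0" unfolding T0_def by simp
  have small: "4 * L * kap\<^sup>2 * \<eta> t \<le> 1" if "t \<ge> T0" for t
  proof -
    have "c * \<eta> t < 1" using N[of t] that unfolding T0_def dist_real_def by auto
    thus ?thesis unfolding c_def by (simp add: algebra_simps)
  qed
  obtain Rb where Rb: "\<And>T. T \<ge> T0 \<Longrightarrow> (\<Sum>t=T0..T. \<eta> t * Gt t) \<le> Rb + (kap\<^sup>2 * (4 * L\<^sup>2 + 4 * L * EH)) * (\<Sum>t=T0..T. (\<eta> t)\<^sup>2)"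
    using main_ineq[OF T0 small] by blast
  have C: "0 \<le> kap\<^sup>2 * (4 * L\<^sup>2 + 4 * L * EH)" using L_pos EH_nn by simp
  note res = avg_to_zero[OF eta_pos eta_lim eta_div Gt_nn T0 C Rb]
  show ?thesis using res unfolding Gt_def by simp
qed

end


theorem proposition2:
  fixes X :: "(real ^ 'd) set" and Y :: "real set"
    and \<rho> :: "((real ^ 'd) \<times> real) measure"
    and K :: "real ^ 'd \<Rightarrow> real ^ 'd \<Rightarrow> real"
    and \<Phi> :: "real ^ 'd \<Rightarrow> 'h::{real_inner, complete_space}"
    and \<phi> \<phi>' :: "real \<Rightarrow> real \<Rightarrow> real"
    and \<eta> :: "nat \<Rightarrow> real"
    and \<alpha> L :: real
    and wH :: 'h
  assumes rho_prob: "prob_space \<rho>"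
    and rho_sets: "sets \<rho> = sets (restrict_space borel (X \<times> Y))"
    and K_feature: "\<forall>x\<in>X. \<forall>x'\<in>X. K x x' = inner (\<Phi> x) (\<Phi> x')"
    and K_cont: "continuous_on (X \<times> X) (\<lambda>(x, x'). K x x')"
    and kappa_fin: "\<exists>\<kappa>. \<forall>x\<in>X. sqrt (K x x) \<le> \<kappa>"
    and phi_nonneg: "\<forall>y\<in>Y. \<forall>s. 0 \<le> \<phi> y s"
    and phi_meas: "(\<lambda>(y, s). \<phi> y s) \<in> borel_measurable (restrict_space borel (Y \<times> UNIV))"
    and phi_convex: "\<forall>y\<in>Y. convex_on UNIV (\<phi> y)"
    and phi_deriv: "\<forall>y\<in>Y. \<forall>s. (\<phi> y has_real_derivative \<phi>' y s) (at s)"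
    and alpha: "0 < \<alpha>" "\<alpha> \<le> 1" and L_pos: "0 < L"
    and phi_hoelder: "\<forall>y\<in>Y. \<forall>s s'. \<bar>\<phi>' y s - \<phi>' y s'\<bar> \<le> L * \<bar>s - s'\<bar> powr \<alpha>"
    and fH_min: "\<forall>w. gen_err \<rho> \<phi> (rkhs_fun \<Phi> wH) \<le> gen_err \<rho> \<phi> (rkhs_fun \<Phi> w)"
    and bdd0: "\<exists>B. \<forall>y\<in>Y. \<phi> y 0 \<le> B"
    and bddH: "\<exists>B. \<forall>x\<in>X. \<forall>y\<in>Y. \<phi> y (rkhs_fun \<Phi> wH x) \<le> B"
    and eta_pos: "\<forall>t\<ge>1. 0 < \<eta> t"
    and eta_lim: "\<eta> \<longlonglongrightarrow> 0"
    and eta_div: "filterlim (\<lambda>T. \<Sum>t=1..T. \<eta> t) at_top sequentially"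
  shows "liminf (\<lambda>t. ereal (\<integral>\<omega>. gen_err \<rho> \<phi> (rkhs_fun \<Phi> (ogd \<Phi> \<phi>' \<eta> \<omega> t))
                                   - gen_err \<rho> \<phi> (rkhs_fun \<Phi> wH) \<partial>(PiM UNIV (\<lambda>_. \<rho>)))) = 0 \<and>
         (\<lambda>T. (\<Sum>t=1..T. \<eta> t * (\<integral>\<omega>. gen_err \<rho> \<phi> (rkhs_fun \<Phi> (ogd \<Phi> \<phi>' \<eta> \<omega> t))
                                   - gen_err \<rho> \<phi> (rkhs_fun \<Phi> wH) \<partial>(PiM UNIV (\<lambda>_. \<rho>))))
             / (\<Sum>t=1..T. \<eta> t)) \<longlonglongrightarrow> 0"
proof -
  interpret ogd_setting X Y \<rho> K \<Phi> \<phi> \<phi>' \<eta> \<alpha> L wH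
    by (rule ogd_setting.intro) (fact+)
  show ?thesis by (rule final[OF eta_lim eta_div])
qed

end
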